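(* Suppose $X$ has well-defined scattered $\Pi_1$-products. If $A$ is a homotopy cut-set for paths $\alpha,\beta:[0,1]\to X$, then there is a homotopy cut-set $B\subseteq A$ for $\alpha$ and $\beta$ such that $\alpha(B\cap(0,1))=\beta(B\cap(0,1))\subseteq\mathbf{aw}(X)$.
   Context: $\simeq$ is path-homotopy. A loop is trivial if path-homotopic to a constant loop. A sequence of loops $\alpha_n$ based at $x$ is a null-sequence if every neighborhood of $x$ contains $\alpha_n([0,1])$ for all but finitely many $n$. $\mathbf{aw}(X)=\{x\in X\mid \text{there is a null-sequence of non-trivial loops based at }x\}$. For paths $\alpha,\beta:[s,t]\to X$, a set $A\subseteq[s,t]$ is a homotopy cut-set for $\alpha,\beta$ if $A$ is closed, nowhere dense, contains $\{s,t\}$, $\alpha|_A=\beta|_A$, and $\alpha|_{[a,b]}\simeq\beta|_{[a,b]}$ for every component $(a,b)$ of $[s,t]\setminus A$. $X$ has well-defined scattered $\Pi_1$-products if any two paths $[0,1]\to X$ that admit a scattered homotopy cut-set are path-homotopic. *)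

theory Defs
  imports "HOL-Analysis.Analysis"
begin

text \<open>The space X is the type 'a (with its topology); homotopies take place in UNIV.\<close>

definition restr_path :: "real \<Rightarrow> real \<Rightarrow> (real \<Rightarrow> 'a) \<Rightarrow> real \<Rightarrow> 'a" where
  "restr_path a b g = (\<lambda>x. g ((b - a) * x + a))"

definition is_loop_at :: "(real \<Rightarrow> 'a::topological_space) \<Rightarrow> 'a \<Rightarrow> bool" where
  "is_loop_at g x \<longleftrightarrow> path g \<and> pathstart g = x \<and> pathfinish g = x"

definition trivial_loop :: "(real \<Rightarrow> 'a::topological_space) \<Rightarrow> bool" where
  "trivial_loop g \<longleftrightarrow> (\<exists>c. homotopic_paths UNIV g (\<lambda>t. c))"

definition null_sequence :: "(nat \<Rightarrow> real \<Rightarrow> 'a::topological_space) \<Rightarrow> 'a \<Rightarrow> bool" where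
  "null_sequence gs x \<longleftrightarrow> (\<forall>n. is_loop_at (gs n) x) \<and>
     (\<forall>U. open U \<and> x \<in> U \<longrightarrow> (\<forall>\<^sub>F n in sequentially. path_image (gs n) \<subseteq> U))"

definition aw :: "'a::topological_space set" where
  "aw = {x. \<exists>gs. null_sequence gs x \<and> (\<forall>n. \<not> trivial_loop (gs n))}"

definition homotopy_cut_set ::
  "real \<Rightarrow> real \<Rightarrow> (real \<Rightarrow> 'a::topological_space) \<Rightarrow> (real \<Rightarrow> 'a) \<Rightarrow> real set \<Rightarrow> bool" where
  "homotopy_cut_set s t \<alpha> \<beta> A \<longleftrightarrow>
     A \<subseteq> {s..t} \<and> closed A \<and> interior (closure A) = {} \<and> s \<in> A \<and> t \<in> A \<and>
     (\<forall>x\<in>A. \<alpha> x = \<beta> x) \<and>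
     (\<forall>a b. a < b \<and> {a<..<b} \<in> components ({s..t} - A) \<longrightarrow>
        homotopic_paths UNIV (restr_path a b \<alpha>) (restr_path a b \<beta>))"

definition scattered :: "'b::topological_space set \<Rightarrow> bool" where
  "scattered A \<longleftrightarrow> (\<forall>T\<subseteq>A. T \<noteq> {} \<longrightarrow> (\<exists>x\<in>T. \<exists>U. open U \<and> U \<inter> T = {x}))"

definition well_defined_scattered_products :: "'a::topological_space itself \<Rightarrow> bool" where
  "well_defined_scattered_products _ \<longleftrightarrow>
     (\<forall>\<alpha> \<beta> :: real \<Rightarrow> 'a. path \<alpha> \<and> path \<beta> \<and>
        (\<exists>A. scattered A \<and> homotopy_cut_set 0 1 \<alpha> \<beta> A) \<longrightarrow> homotopic_paths UNIV \<alpha> \<beta>)"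

end

theory Submission
  imports Defs
begin



definition Pp :: "(real \<Rightarrow> 'a::topological_space) \<Rightarrow> (real \<Rightarrow> 'a) \<Rightarrow> real \<Rightarrow> real \<Rightarrow> bool" where
  "Pp \<alpha> \<beta> u v \<longleftrightarrow> homotopic_paths UNIV (restr_path u v \<alpha>) (restr_path u v \<beta>)"

lemma restr_comp: "restr_path u v g = g \<circ> subpath u v (\<lambda>t::real. t)"
  by (simp add: restr_path_def subpath_def o_def)

lemma path_id01: "path (\<lambda>t::real. t)" "path_image (\<lambda>t::real. t) = {0..1}"
  by (auto simp: path_def path_image_def continuous_on_id)

lemma path_restr: "path g \<Longrightarrow> u\<in>{0..1} \<Longrightarrow> v\<in>{0..1} \<Longrightarrow> path (restr_path u v g)"
proof -
  assume a: "path g" "u\<in>{0..1}" "v\<in>{0..1}"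
  have p: "path (subpath u v (\<lambda>t::real. t))" using path_subpath[OF path_id01(1)] a by simp
  have "path_image (subpath u v (\<lambda>t::real. t)) \<subseteq> {0..1}"
    using path_image_subpath_subset[of u v "\<lambda>t::real. t"] a path_id01(2) by simp
  then have "continuous_on (path_image (subpath u v (\<lambda>t::real. t))) g"
    using a(1) continuous_on_subset unfolding path_def by blast
  then show ?thesis unfolding restr_comp using path_continuous_image[OF p] by blast
qed

lemma restr_ends[simp]: "pathstart (restr_path u v g) = g u" "pathfinish (restr_path u v g) = g v"
  by (auto simp: restr_path_def pathstart_def pathfinish_def)

lemma transport: "homotopic_paths {0..1} f1 f2 \<Longrightarrow> path g \<Longrightarrow> homotopic_paths UNIV (g \<circ> f1) (g \<circ> f2)"
  using homotopic_paths_continuous_image[of "{0..1}" f1 f2 g UNIV] by (auto simp: path_def)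

lemma join_restr:
  assumes "path g" "u\<in>{0..1}" "v\<in>{0..1}" "w\<in>{0..1}"
  shows "homotopic_paths UNIV (restr_path u v g +++ restr_path v w g) (restr_path u w g)"
proof -
  have "homotopic_paths {0..1} (subpath u v (\<lambda>t::real. t) +++ subpath v w (\<lambda>t. t)) (subpath u w (\<lambda>t. t))"
    using homotopic_join_subpaths[of "\<lambda>t::real. t" "{0..1}" u v w] assms path_id01 by auto
  from transport[OF this assms(1)] show ?thesis
    by (simp add: restr_comp path_compose_join)
qed

lemma rev_restr: "reversepath (restr_path u v g) = restr_path v u g"
  by (auto simp: reversepath_def restr_path_def algebra_simps)

lemma Psym: "Pp \<alpha> \<beta> u v \<Longrightarrow> Pp \<alpha> \<beta> v u"
  unfolding Pp_def using homotopic_paths_reversepath_D[of UNIV "restr_path u v \<alpha>" "restr_path u v \<beta>"]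
  by (simp add: rev_restr)

lemma Ptrans:
  assumes "path \<alpha>" "path \<beta>" "u\<in>{0..1}" "v\<in>{0..1}" "w\<in>{0..1}" "Pp \<alpha> \<beta> u v" "Pp \<alpha> \<beta> v w"
  shows "Pp \<alpha> \<beta> u w"
proof -
  have "homotopic_paths UNIV (restr_path u w \<alpha>) (restr_path u v \<alpha> +++ restr_path v w \<alpha>)"
    using join_restr assms homotopic_paths_sym by blast
  also have "homotopic_paths UNIV \<dots> (restr_path u v \<beta> +++ restr_path v w \<beta>)"
    using assms(6,7) unfolding Pp_def by (intro homotopic_paths_join) auto
  also have "homotopic_paths UNIV \<dots> (restr_path u w \<beta>)"
    using join_restr assms by blast
  finally show ?thesis unfolding Pp_def .
qed

lemma Prefl: "path \<alpha> \<Longrightarrow> x \<in> {0..1} \<Longrightarrow> \<alpha> x = \<beta> x \<Longrightarrow> Pp \<alpha> \<beta> x x"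
proof -
  assume a: "path \<alpha>" "x \<in> {0..1}" "\<alpha> x = \<beta> x"
  have e: "restr_path x x \<alpha> = restr_path x x \<beta>" using a(3) by (simp add: restr_path_def)
  have "path (restr_path x x \<alpha>)" using path_restr a by blast
  then show ?thesis unfolding Pp_def e[symmetric] by simp
qed




lemma comp_end:
  fixes S :: "real set"
  assumes C: "{u<..<v} \<in> components ({0..1} - S)" and uv: "u < v"
  shows "u \<in> S \<and> v \<in> S \<and> 0 \<le> u \<and> v \<le> 1 \<and> {u<..<v} \<inter> S = {}"
proof -
  have sub: "{u<..<v} \<subseteq> {0..1} - S" using in_components_subset C by blast
  have u0: "0 \<le> u"
  proof (rule ccontr)
    assume "\<not> 0 \<le> u"
    then have t: "(u + min v 0)/2 \<in> {u<..<v}" "(u + min v 0)/2 < 0" using uv by (auto simp: min_def)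
    from sub t(1) have "(u + min v 0)/2 \<in> {0..1}" by blast
    then show False using t(2) by simp
  qed
  have v1: "v \<le> 1"
  proof (rule ccontr)
    assume "\<not> v \<le> 1"
    then have t: "(v + max u 1)/2 \<in> {u<..<v}" "(v + max u 1)/2 > 1" using uv by (auto simp: max_def)
    from sub t(1) have "(v + max u 1)/2 \<in> {0..1}" by blast
    then show False using t(2) by simp
  qed
  have uS: "u \<in> S"
  proof (rule ccontr)
    assume "u \<notin> S"
    have "{u..<v} \<subseteq> {0..1} - S"
    proof
      fix y assume y: "y \<in> {u..<v}"
      show "y \<in> {0..1} - S"
      proof (cases "y = u")
        case True then show ?thesis using \<open>u \<notin> S\<close> u0 uv v1 by simp
      next
        case False then have "y \<in> {u<..<v}" using y by simp
        then show ?thesis using sub by blast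
      qed
    qed
    moreover have "connected {u..<v}" by (simp add: connected_Ico)
    moreover have "{u<..<v} \<inter> {u..<v} \<noteq> {}"
    proof -
      have "(u+v)/2 \<in> {u<..<v} \<inter> {u..<v}" using uv by auto
      then show ?thesis by blast
    qed
    ultimately have "{u..<v} \<subseteq> {u<..<v}" using components_maximal[OF C] by blast
    then show False using uv by auto
  qed
  have vS: "v \<in> S"
  proof (rule ccontr)
    assume "v \<notin> S"
    have "{u<..v} \<subseteq> {0..1} - S"
    proof
      fix y assume y: "y \<in> {u<..v}"
      show "y \<in> {0..1} - S"
      proof (cases "y = v")
        case True then show ?thesis using \<open>v \<notin> S\<close> u0 uv v1 by simp
      next
        case False then have "y \<in> {u<..<v}" using y by simp
        then show ?thesis using sub by blast
      qed
    qed
    moreover have "connected {u<..v}" by (simp add: connected_Ioc)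
    moreover have "{u<..<v} \<inter> {u<..v} \<noteq> {}"
    proof -
      have "(u+v)/2 \<in> {u<..<v} \<inter> {u<..v}" using uv by auto
      then show ?thesis by blast
    qed
    ultimately have "{u<..v} \<subseteq> {u<..<v}" using components_maximal[OF C] by blast
    then show False using uv by auto
  qed
  show ?thesis using uS vS u0 v1 sub by auto
qed

lemma comp_intro:
  fixes S :: "real set"
  assumes "u<v" "0 \<le> u" "v \<le> 1" "u\<in>S" "v\<in>S" "{u<..<v} \<inter> S = {}"
  shows "{u<..<v} \<in> components ({0..1} - S)"
  unfolding in_components_maximal
proof (intro conjI allI impI)
  show "{u<..<v} \<noteq> {}" using assms by auto
  show "{u<..<v} \<subseteq> {0..1} - S" using assms by auto
  show "connected {u<..<v}" by simp
  fix D assume D: "D \<noteq> {} \<and> {u<..<v} \<subseteq> D \<and> D \<subseteq> {0..1} - S \<and> connected D"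
  have "(u+v)/2 \<in> {u<..<v}" using assms by auto
  then have m: "(u+v)/2 \<in> D" using D by blast
  have "D \<subseteq> {u<..<v}"
  proof
    fix y assume y: "y \<in> D"
    show "y \<in> {u<..<v}"
    proof (rule ccontr)
      assume "y \<notin> {u<..<v}"
      then consider "y \<le> u" | "v \<le> y" by auto
      then show False
      proof cases
        case 1
        have "{y..(u+v)/2} \<subseteq> D" using connected_contains_Icc[of D y "(u+v)/2"] D y m by simp
        then have "u \<in> D" using 1 assms by auto
        then show False using D assms by auto
      next
        case 2
        have "{(u+v)/2..y} \<subseteq> D" using connected_contains_Icc[of D "(u+v)/2" y] D y m by simp
        then have "v \<in> D" using 2 assms by auto
        then show False using D assms by auto
      qed
    qed
  qed
  then show "D = {u<..<v}" using D by (intro equalityI) simp_all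
qed

lemma cut_facts:
  assumes "homotopy_cut_set s t \<alpha> \<beta> A"
  shows "A \<subseteq> {s..t}" "closed A" "interior (closure A) = {}" "s \<in> A" "t \<in> A"
    "\<forall>x\<in>A. \<alpha> x = \<beta> x"
    "\<And>a b. a < b \<Longrightarrow> {a<..<b} \<in> components ({s..t} - A) \<Longrightarrow>
        homotopic_paths UNIV (restr_path a b \<alpha>) (restr_path a b \<beta>)"
  using assms unfolding homotopy_cut_set_def by blast+

lemma gap_P:
  assumes "homotopy_cut_set 0 1 \<alpha> \<beta> A" "u<v" "u\<in>A" "v\<in>A" "{u<..<v} \<inter> A = {}"
  shows "Pp \<alpha> \<beta> u v"
proof -
  have "A \<subseteq> {0..1}" using cut_facts[OF assms(1)] by simp
  then have "0 \<le> u" "v \<le> 1" using assms(3,4) by auto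
  then have "{u<..<v} \<in> components ({0..1} - A)" using comp_intro assms by blast
  then show ?thesis using cut_facts(7)[OF assms(1) assms(2)] unfolding Pp_def by blast
qed




lemma countable_interior_empty:
  fixes S :: "real set"
  assumes "countable S" shows "interior S = {}"
proof (rule ccontr)
  assume "interior S \<noteq> {}"
  then obtain x where "x \<in> interior S" "x \<notin> S"
    using open_minus_countable[OF assms _ open_interior] by blast
  then show False using interior_subset by blast
qed

lemma restr_restr: "restr_path u v (restr_path p q g) = restr_path (p+(q-p) * u) (p+(q-p) * v) g"
  by (simp add: restr_path_def algebra_simps)

lemma seq_scattered:
  fixes s :: "nat \<Rightarrow> real"
  assumes s: "s \<longlonglongrightarrow> 0" and s01: "\<forall>n. 0 < s n \<and> s n \<le> 1"
  shows "scattered (insert 0 (insert 1 (range s)))"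
proof -
  let ?S = "insert 0 (insert 1 (range s))"
  have iso: "\<exists>U. open U \<and> U \<inter> ?S = {x}" if x: "x \<in> ?S" "x \<noteq> 0" for x
  proof -
    have xpos: "x > 0" using x s01 by auto
    define r where "r = x/2"
    have rpos: "r > 0" using xpos r_def by simp
    have "eventually (\<lambda>n. s n < r) sequentially" using order_tendstoD(2)[OF s rpos] .
    then obtain N where N: "\<And>n. n \<ge> N \<Longrightarrow> s n < r" by (auto simp: eventually_sequentially)
    have fin: "finite (insert 1 (s ` {..<N}))" by simp
    define E where "E = (?S - {x}) \<inter> {r..}"
    have "E \<subseteq> insert 1 (s ` {..<N})"
    proof
      fix y assume y: "y \<in> E"
      then have "y \<ge> r" "y \<noteq> 0" using rpos by (auto simp: E_def)
      moreover have "y \<in> ?S" using y by (auto simp: E_def)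
      ultimately have "y = 1 \<or> (\<exists>n. y = s n)" by auto
      then show "y \<in> insert 1 (s ` {..<N})"
      proof
        assume "\<exists>n. y = s n"
        then obtain n where n: "y = s n" by blast
        have "n < N" using N[of n] n \<open>y \<ge> r\<close> by (meson not_le)
        then show ?thesis using n by blast
      qed simp
    qed
    then have finE: "finite E" using fin finite_subset by blast
    define U where "U = {r<..} - E"
    have "open U" unfolding U_def using finE by (intro open_Diff finite_imp_closed) auto
    moreover have "U \<inter> ?S = {x}"
    proof
      show "U \<inter> ?S \<subseteq> {x}"
      proof
        fix y assume y: "y \<in> U \<inter> ?S"
        then have "y > r" "y \<notin> E" by (simp_all add: U_def)
        then show "y \<in> {x}" using y unfolding E_def by auto
      qed
      have "x > r" using xpos r_def by simp
      moreover have "x \<notin> E" unfolding E_def by simp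
      ultimately have "x \<in> U" unfolding U_def by simp
      then show "{x} \<subseteq> U \<inter> ?S" using x by simp
    qed
    ultimately show ?thesis by blast
  qed
  show ?thesis unfolding scattered_def
  proof (intro allI impI)
    fix T assume T: "T \<subseteq> ?S" "T \<noteq> {}"
    show "\<exists>x\<in>T. \<exists>U. open U \<and> U \<inter> T = {x}"
    proof (cases "T \<subseteq> {0}")
      case True
      then have "T = {0}" using T by blast
      then show ?thesis by auto
    next
      case False
      then obtain x where x: "x \<in> T" "x \<noteq> 0" by blast
      moreover have "x \<in> ?S" using x T by blast
      ultimately obtain U where U: "open U" "U \<inter> ?S = {x}" using iso by blast
      then have "U \<inter> T = {x}" using x T by blast
      then show ?thesis using U x by blast
    qed
  qed
qed

lemma L:
  fixes \<alpha> \<beta> :: "real \<Rightarrow> 'a::topological_space" and s :: "nat \<Rightarrow> real"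
  assumes wd: "well_defined_scattered_products TYPE('a)"
   and pa: "path \<alpha>" and pb: "path \<beta>"
   and ad: "a \<in> {0..1}" "d \<in> {0..1}"
   and ea: "\<alpha> a = \<beta> a" and ed: "\<alpha> d = \<beta> d"
   and s: "s \<longlonglongrightarrow> 0" and s01: "\<forall>n. 0 < s n \<and> s n \<le> 1"
   and es: "\<forall>n. \<alpha> (a + (d-a) * s n) = \<beta> (a + (d-a) * s n)"
   and Q: "\<forall>x\<in>insert 1 (range s). \<forall>y\<in>insert 1 (range s). x < y \<longrightarrow> Pp \<alpha> \<beta> (a+(d-a)*x) (a+(d-a)*y)"
  shows "Pp \<alpha> \<beta> a d"
proof -
  let ?S = "insert 0 (insert 1 (range s))"
  let ?a = "restr_path a d \<alpha>" and ?b = "restr_path a d \<beta>"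
  have pa': "path ?a" and pb': "path ?b" using path_restr pa pb ad by blast+
  have sc: "scattered ?S" using seq_scattered[OF s s01] .
  have "compact (insert 0 (range s))" using compact_sequence_with_limit[OF s] .
  then have "compact (insert 1 (insert 0 (range s)))" by (rule compact_insert)
  then have cS: "compact ?S" by (simp add: insert_commute)
  then have clS: "closed ?S" by (rule compact_imp_closed)
  have "countable ?S" by simp
  then have intS: "interior (closure ?S) = {}"
    using countable_interior_empty closure_closed[OF clS] by simp
  have subS: "?S \<subseteq> {0..1}" using s01 by (auto simp: less_imp_le)
  have eqS: "\<forall>x\<in>?S. ?a x = ?b x"
  proof
    fix x assume "x \<in> ?S"
    then consider "x = 0" | "x = 1" | n where "x = s n" by blast
    then show "?a x = ?b x"
    proof cases
      case 3 then show ?thesis using es[rule_format, of n] by (simp add: restr_path_def mult.commute add.commute)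
    qed (use ea ed in \<open>simp_all add: restr_path_def\<close>)
  qed
  have compS: "homotopic_paths UNIV (restr_path u v ?a) (restr_path u v ?b)"
    if uv: "u < v" and C: "{u<..<v} \<in> components ({0..1} - ?S)" for u v
  proof -
    have ce: "u \<in> ?S \<and> v \<in> ?S \<and> 0 \<le> u \<and> v \<le> 1 \<and> {u<..<v} \<inter> ?S = {}"
      using comp_end[OF C uv] .
    have vpos: "v > 0" using ce uv by linarith
    have "u \<noteq> 0"
    proof
      assume u0: "u = 0"
      have "eventually (\<lambda>n. s n < v) sequentially" using order_tendstoD(2)[OF s vpos] .
      then obtain n where "s n < v" by (auto simp: eventually_sequentially)
      then have "s n \<in> {u<..<v} \<inter> ?S" using s01 u0 by auto
      then show False using ce by blast
    qed
    then have "u \<in> insert 1 (range s)" "v \<in> insert 1 (range s)" using ce vpos by auto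
    then have "Pp \<alpha> \<beta> (a+(d-a) * u) (a+(d-a) * v)" using Q uv by blast
    then show ?thesis unfolding Pp_def restr_restr .
  qed
  have "homotopy_cut_set 0 1 ?a ?b ?S"
    unfolding homotopy_cut_set_def
  proof (intro conjI allI impI subS clS intS eqS)
    fix u v assume "u < v \<and> {u<..<v} \<in> components ({0..1} - ?S)"
    then show "homotopic_paths UNIV (restr_path u v ?a) (restr_path u v ?b)" using compS by blast
  qed auto
  then have "\<exists>A. scattered A \<and> homotopy_cut_set 0 1 ?a ?b A" using sc by blast
  moreover have "path ?a \<and> path ?b \<and> (\<exists>A. scattered A \<and> homotopy_cut_set 0 1 ?a ?b A) \<longrightarrow> homotopic_paths UNIV ?a ?b"
    using wd unfolding well_defined_scattered_products_def by (rule allE, rule_tac x="?b" in allE)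
  ultimately have "homotopic_paths UNIV ?a ?b" using pa' pb' by blast
  then show ?thesis unfolding Pp_def .
qed




definition good :: "(real \<Rightarrow> 'a::topological_space) \<Rightarrow> (real \<Rightarrow> 'a) \<Rightarrow> real set \<Rightarrow> real \<Rightarrow> bool" where
  "good \<alpha> \<beta> A x \<longleftrightarrow> (\<exists>e>0. \<forall>c\<in>A. dist c x < e \<longrightarrow> Pp \<alpha> \<beta> x c)"

lemma D_closed:
  assumes cA: "closed A" and A01: "A \<subseteq> {0..1}" and pa: "path \<alpha>" and pb: "path \<beta>"
  shows "closed {x\<in>A. \<not> good \<alpha> \<beta> A x}"
proof -
  have "open (- {x\<in>A. \<not> good \<alpha> \<beta> A x})"
    unfolding open_dist
  proof
    fix x assume x: "x \<in> - {x\<in>A. \<not> good \<alpha> \<beta> A x}"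
    show "\<exists>e>0. \<forall>y. dist y x < e \<longrightarrow> y \<in> - {x\<in>A. \<not> good \<alpha> \<beta> A x}"
    proof (cases "x \<in> A")
      case False
      then have "x \<in> - A" by simp
      moreover have "open (- A)" using cA by auto
      ultimately obtain e where "e > 0" "\<forall>y. dist y x < e \<longrightarrow> y \<in> - A" unfolding open_dist by blast
      then show ?thesis by auto
    next
      case True
      then have "good \<alpha> \<beta> A x" using x by simp
      then obtain e where e: "e > 0" "\<forall>c\<in>A. dist c x < e \<longrightarrow> Pp \<alpha> \<beta> x c" unfolding good_def by blast
      have "\<forall>y. dist y x < e/2 \<longrightarrow> y \<in> - {x\<in>A. \<not> good \<alpha> \<beta> A x}"
      proof (intro allI impI)
        fix y assume y: "dist y x < e/2"
        show "y \<in> - {x\<in>A. \<not> good \<alpha> \<beta> A x}"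
        proof (cases "y \<in> A")
          case yA: True
          have "good \<alpha> \<beta> A y" unfolding good_def
          proof (intro exI conjI ballI impI)
            show "e/2 > 0" using e by simp
            fix c assume c: "c \<in> A" "dist c y < e/2"
            have "dist c x < e" using c y dist_triangle[of c x y] by simp
            then have "Pp \<alpha> \<beta> x c" using e c by blast
            moreover have "Pp \<alpha> \<beta> x y" using e yA y by simp
            moreover have "y \<in> {0..1}" "x \<in> {0..1}" "c \<in> {0..1}" using A01 c yA True by auto
            ultimately show "Pp \<alpha> \<beta> y c"
              using Ptrans[OF pa pb, of y x c] Psym by blast
          qed
          then show ?thesis by simp
        qed simp
      qed
      then show ?thesis using e(1) by (intro exI[of _ "e/2"]) simp
    qed
  qed
  then show ?thesis by (simp add: closed_def)
qed

lemma chain: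
  assumes cut: "homotopy_cut_set 0 1 \<alpha> \<beta> A" and pa: "path \<alpha>" and pb: "path \<beta>"
    and xy: "x \<le> y" "x \<in> A" "y \<in> A"
    and allgood: "\<forall>z\<in>A \<inter> {x..y}. good \<alpha> \<beta> A z"
  shows "Pp \<alpha> \<beta> x y"
proof -
  have A01: "A \<subseteq> {0..1}" and cA: "closed A" and eqA: "\<forall>x\<in>A. \<alpha> x = \<beta> x"
    using cut_facts[OF cut] by auto
  let ?K = "{x..y} \<inter> A"
  have cK: "compact ?K" using cA by (intro compact_Int_closed) auto
  have "\<forall>z\<in>?K. \<exists>e. e > 0 \<and> (\<forall>c\<in>A. dist c z < e \<longrightarrow> Pp \<alpha> \<beta> z c)"
    using allgood unfolding good_def by auto
  from bchoice[OF this] obtain ef where ef0: "\<forall>z\<in>?K. ef z > 0 \<and> (\<forall>c\<in>A. dist c z < ef z \<longrightarrow> Pp \<alpha> \<beta> z c)"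
    by blast
  then have ef: "\<And>z. z \<in> ?K \<Longrightarrow> ef z > 0 \<and> (\<forall>c\<in>A. dist c z < ef z \<longrightarrow> Pp \<alpha> \<beta> z c)"
    by blast
  have cov: "?K \<subseteq> \<Union>((\<lambda>z. ball z (ef z)) ` ?K)"
  proof
    fix z assume "z \<in> ?K"
    then have "z \<in> ball z (ef z)" using ef by simp
    then show "z \<in> \<Union>((\<lambda>z. ball z (ef z)) ` ?K)" using \<open>z \<in> ?K\<close> by blast
  qed
  obtain \<delta> where \<delta>: "0 < \<delta>" "\<And>u. u \<in> ?K \<Longrightarrow> \<exists>G \<in> (\<lambda>z. ball z (ef z)) ` ?K. ball u \<delta> \<subseteq> G"
    using Heine_Borel_lemma[OF cK cov] by blast
  have unif: "Pp \<alpha> \<beta> u v" if u: "u \<in> ?K" and v: "v \<in> ?K" and uv: "dist u v < \<delta>" for u v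
  proof -
    obtain z where z: "z \<in> ?K" "ball u \<delta> \<subseteq> ball z (ef z)" using \<delta>(2)[OF u] by blast
    have "u \<in> ball u \<delta>" "v \<in> ball u \<delta>" using \<delta>(1) uv by auto
    then have "u \<in> ball z (ef z)" "v \<in> ball z (ef z)" using z(2) by blast+
    then have "Pp \<alpha> \<beta> z u" "Pp \<alpha> \<beta> z v" using ef[OF z(1)] u v by (auto simp: dist_commute)
    then have "Pp \<alpha> \<beta> u z" using Psym by blast
    moreover have "u \<in> {0..1}" "z \<in> {0..1}" "v \<in> {0..1}" using u v z(1) A01 by auto
    ultimately show ?thesis using Ptrans[OF pa pb, of u z v] \<open>Pp \<alpha> \<beta> z v\<close> by blast
  qed
  have ind: "\<forall>z\<in>?K. z - x \<le> real n * (\<delta>/2) \<longrightarrow> Pp \<alpha> \<beta> x z" for n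
  proof (induction n)
    case 0
    show ?case
    proof (intro ballI impI)
      fix z assume "z \<in> ?K" "z - x \<le> real 0 * (\<delta>/2)"
      then have "z = x" by simp
      then show "Pp \<alpha> \<beta> x z" using Prefl[OF pa] xy A01 eqA by blast
    qed
  next
    case (Suc n)
    show ?case
    proof (intro ballI impI)
      fix z assume z: "z \<in> ?K" "z - x \<le> real (Suc n) * (\<delta>/2)"
      have xK: "x \<in> ?K" using xy by simp
      show "Pp \<alpha> \<beta> x z"
      proof (cases "z - x < \<delta>")
        case True
        then have "dist x z < \<delta>" using z by (simp add: dist_real_def)
        then show ?thesis using unif xK z by blast
      next
        case False
        let ?M = "?K \<inter> {..z - \<delta>/2}" and ?N = "?K \<inter> {z - \<delta>/2..}"
        have "compact ?M" "compact ?N" using cK by (auto intro!: compact_Int_closed)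
        moreover have "x \<in> ?M" "z \<in> ?N" using xK z False \<delta>(1) by auto
        ultimately obtain m p where m: "m \<in> ?M" "\<forall>t\<in>?M. t \<le> m" and p: "p \<in> ?N" "\<forall>t\<in>?N. p \<le> t"
          using compact_attains_sup[of ?M] compact_attains_inf[of ?N] by blast
        have "m - x \<le> real n * (\<delta>/2)" using m z by (simp add: algebra_simps)
        then have Pxm: "Pp \<alpha> \<beta> x m" using Suc.IH m by blast
        have "dist p z < \<delta>" using p z \<delta>(1) by (simp add: dist_real_def)
        then have Ppz: "Pp \<alpha> \<beta> p z" using unif p z by blast
        have Pmp: "Pp \<alpha> \<beta> m p"
        proof (cases "m < p")
          case True
          have "{m<..<p} \<inter> A = {}"
          proof (rule ccontr)
            assume "{m<..<p} \<inter> A \<noteq> {}"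
            then obtain w where w: "w \<in> A" "m < w" "w < p" by auto
            have "w \<in> ?K" using w m p by auto
            then show False
            proof (cases "w \<le> z - \<delta>/2")
              case True then have "w \<in> ?M" using \<open>w \<in> ?K\<close> by simp
              then have "w \<le> m" using m(2) by blast
              then show False using w by simp
            next
              case False then have "w \<in> ?N" using \<open>w \<in> ?K\<close> by simp
              then have "p \<le> w" using p(2) by blast
              then show False using w by simp
            qed
          qed
          then show ?thesis using gap_P[OF cut True] m p by blast
        next
          case False
          then have "m = p" using m p by simp
          then show ?thesis using Prefl[OF pa] m A01 eqA by blast
        qed
        have i: "x \<in> {0..1}" "m \<in> {0..1}" "p \<in> {0..1}" "z \<in> {0..1}" using m p z xy A01 by auto
        have "Pp \<alpha> \<beta> x p" using Ptrans[OF pa pb i(1) i(2) i(3) Pxm Pmp] .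
        then show ?thesis using Ptrans[OF pa pb i(1) i(3) i(4) _ Ppz] by blast
      qed
    qed
  qed
  obtain n where "(y - x) / (\<delta>/2) \<le> real n" using real_arch_simple by blast
  then have "y - x \<le> real n * (\<delta>/2)" using \<delta>(1) by (simp add: field_simps)
  then show ?thesis using ind xy by simp
qed




lemma M_left:
  fixes \<alpha> \<beta> :: "real \<Rightarrow> 'a::topological_space"
  assumes wd: "well_defined_scattered_products TYPE('a)"
    and cut: "homotopy_cut_set 0 1 \<alpha> \<beta> A" and pa: "path \<alpha>" and pb: "path \<beta>"
    and am: "a < m" and aA: "a \<in> A" and mA: "m \<in> A"
    and H1: "\<forall>x\<in>A \<inter> {a<..m}. \<forall>y\<in>A \<inter> {a<..m}. Pp \<alpha> \<beta> x y"
  shows "Pp \<alpha> \<beta> a m"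
proof -
  have A01: "A \<subseteq> {0..1}" and cA: "closed A" and eqA: "\<forall>x\<in>A. \<alpha> x = \<beta> x"
    using cut_facts[OF cut] by auto
  show ?thesis
  proof (cases "\<exists>e>0. A \<inter> {a<..<a+e} = {}")
    case True
    then obtain e where e: "e>0" "A \<inter> {a<..<a+e} = {}" by blast
    define e' where "e' = min e (m-a)"
    have e': "e' > 0" "e' \<le> e" "a + e' \<le> m" using e am by (auto simp: e'_def)
    let ?N = "{a+e'..m} \<inter> A"
    have "compact ?N" using cA by (intro compact_Int_closed) auto
    moreover have "m \<in> ?N" using e' mA by simp
    ultimately obtain p where p: "p \<in> ?N" "\<forall>t\<in>?N. p \<le> t"
      using compact_attains_inf[of ?N] by blast
    have ap: "a < p" using p e' by auto
    have "{a<..<p} \<inter> A = {}"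
    proof (rule ccontr)
      assume "{a<..<p} \<inter> A \<noteq> {}"
      then obtain w where w: "w \<in> A" "a < w" "w < p" by auto
      show False
      proof (cases "w < a + e'")
        case True
        then have "w \<in> A \<inter> {a<..<a+e}" using w e' by simp
        then show False using e by blast
      next
        case False
        then have "w \<in> ?N" using w p by simp
        then have "p \<le> w" using p(2) by blast
        then show False using w by simp
      qed
    qed
    then have Pap: "Pp \<alpha> \<beta> a p" using gap_P[OF cut ap aA] p by blast
    have "p \<in> A \<inter> {a<..m}" "m \<in> A \<inter> {a<..m}" using p ap mA am by auto
    then have Ppm: "Pp \<alpha> \<beta> p m" using H1 by blast
    have i: "a \<in> {0..1}" "p \<in> {0..1}" "m \<in> {0..1}" using aA p mA A01 by auto
    show ?thesis using Ptrans[OF pa pb i Pap Ppm] .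
  next
    case False
    have "\<exists>w\<in>A. a < w \<and> w < a + (m-a)/real (Suc n)" for n
    proof -
      have "(m-a)/real (Suc n) > 0" using am by simp
      then have "A \<inter> {a<..<a + (m-a)/real (Suc n)} \<noteq> {}" using False by blast
      then show ?thesis by auto
    qed
    then have "\<forall>n. \<exists>w. w \<in> A \<and> a < w \<and> w < a + (m-a)/real (Suc n)" by blast
    from choice[OF this] obtain w where w0: "\<forall>n. w n \<in> A \<and> a < w n \<and> w n < a + (m-a)/real (Suc n)" by blast
    then have w: "\<And>n. w n \<in> A \<and> a < w n \<and> w n < a + (m-a)/real (Suc n)" by blast
    define s where "s n = (w n - a)/(m-a)" for n
    have sb: "0 < s n \<and> s n \<le> inverse (real (Suc n))" for n
    proof -
      have "w n - a < (m-a)/real (Suc n)" using w[of n] by simp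
      then have "(w n - a)/(m-a) < inverse (real (Suc n))" using am
        by (simp add: divide_simps mult.commute)
      then show ?thesis using w[of n] am by (simp add: s_def)
    qed
    have s01: "\<forall>n. 0 < s n \<and> s n \<le> 1"
    proof
      fix n have "inverse (real (Suc n)) \<le> 1" using le_imp_inverse_le[of 1 "real (Suc n)"] by simp
      then show "0 < s n \<and> s n \<le> 1" using sb[of n] by linarith
    qed
    have s0: "s \<longlonglongrightarrow> 0"
    proof (rule tendsto_sandwich[of "\<lambda>n. 0" s sequentially "\<lambda>n. inverse (real (Suc n))"])
      show "\<forall>\<^sub>F n in sequentially. 0 \<le> s n" using sb by (simp add: less_imp_le)
      show "\<forall>\<^sub>F n in sequentially. s n \<le> inverse (real (Suc n))" using sb by simp
    qed (rule tendsto_const LIMSEQ_inverse_real_of_nat)+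
    have ws: "a + (m-a) * s n = w n" for n using am by (simp add: s_def)
    have pt: "a + (m-a) * x \<in> A \<inter> {a<..m}" if x: "x \<in> insert 1 (range s)" for x
    proof -
      consider "x = 1" | n where "x = s n" using x by blast
      then show ?thesis
      proof cases
        case 1 then show ?thesis using mA am by simp
      next
        case 2
        have "(m-a)/real (Suc n) \<le> m - a" using am by (simp add: divide_simps)
        then show ?thesis using 2 ws[of n] w[of n] by simp
      qed
    qed
    have Q: "\<forall>x\<in>insert 1 (range s). \<forall>y\<in>insert 1 (range s). x < y \<longrightarrow> Pp \<alpha> \<beta> (a+(m-a)*x) (a+(m-a)*y)"
      using pt H1 by blast
    have es: "\<forall>n. \<alpha> (a + (m-a) * s n) = \<beta> (a + (m-a) * s n)" using ws w eqA by simp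
    show ?thesis
      using L[OF wd pa pb _ _ _ _ s0 s01 es Q] aA mA A01 eqA by blast
  qed
qed

lemma M_right:
  fixes \<alpha> \<beta> :: "real \<Rightarrow> 'a::topological_space"
  assumes wd: "well_defined_scattered_products TYPE('a)"
    and cut: "homotopy_cut_set 0 1 \<alpha> \<beta> A" and pa: "path \<alpha>" and pb: "path \<beta>"
    and mb: "m < b" and bA: "b \<in> A" and mA: "m \<in> A"
    and H1: "\<forall>x\<in>A \<inter> {m..<b}. \<forall>y\<in>A \<inter> {m..<b}. Pp \<alpha> \<beta> x y"
  shows "Pp \<alpha> \<beta> m b"
proof -
  have A01: "A \<subseteq> {0..1}" and cA: "closed A" and eqA: "\<forall>x\<in>A. \<alpha> x = \<beta> x"
    using cut_facts[OF cut] by auto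
  show ?thesis
  proof (cases "\<exists>e>0. A \<inter> {b-e<..<b} = {}")
    case True
    then obtain e where e: "e>0" "A \<inter> {b-e<..<b} = {}" by blast
    define e' where "e' = min e (b-m)"
    have e': "e' > 0" "e' \<le> e" "m \<le> b - e'" using e mb by (auto simp: e'_def)
    let ?N = "{m..b-e'} \<inter> A"
    have "compact ?N" using cA by (intro compact_Int_closed) auto
    moreover have "m \<in> ?N" using e' mA by simp
    ultimately obtain p where p: "p \<in> ?N" "\<forall>t\<in>?N. t \<le> p"
      using compact_attains_sup[of ?N] by blast
    have pb': "p < b" using p e' by auto
    have "{p<..<b} \<inter> A = {}"
    proof (rule ccontr)
      assume "{p<..<b} \<inter> A \<noteq> {}"
      then obtain w where w: "w \<in> A" "p < w" "w < b" by auto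
      show False
      proof (cases "w > b - e'")
        case True
        then have "w \<in> A \<inter> {b-e<..<b}" using w e' by simp
        then show False using e by blast
      next
        case False
        then have "w \<in> ?N" using w p by simp
        then have "w \<le> p" using p(2) by blast
        then show False using w by simp
      qed
    qed
    then have Ppb: "Pp \<alpha> \<beta> p b" using gap_P[OF cut pb' _ bA] p by blast
    have "p \<in> A \<inter> {m..<b}" "m \<in> A \<inter> {m..<b}" using p pb' mA mb by auto
    then have Pmp: "Pp \<alpha> \<beta> m p" using H1 by blast
    have i: "m \<in> {0..1}" "p \<in> {0..1}" "b \<in> {0..1}" using bA p mA A01 by auto
    show ?thesis using Ptrans[OF pa pb i Pmp Ppb] .
  next
    case False
    have "\<exists>w\<in>A. b - (b-m)/real (Suc n) < w \<and> w < b" for n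
    proof -
      have "(b-m)/real (Suc n) > 0" using mb by simp
      then have "A \<inter> {b - (b-m)/real (Suc n)<..<b} \<noteq> {}" using False by blast
      then show ?thesis by auto
    qed
    then have "\<forall>n. \<exists>w. w \<in> A \<and> b - (b-m)/real (Suc n) < w \<and> w < b" by blast
    from choice[OF this] obtain w where w0: "\<forall>n. w n \<in> A \<and> b - (b-m)/real (Suc n) < w n \<and> w n < b" by blast
    then have w: "\<And>n. w n \<in> A \<and> b - (b-m)/real (Suc n) < w n \<and> w n < b" by blast
    define s where "s n = (w n - b)/(m-b)" for n
    have sb: "0 < s n \<and> s n \<le> inverse (real (Suc n))" for n
    proof -
      have "b - w n < (b-m)/real (Suc n)" using w[of n] by simp
      then have "(b - w n)/(b-m) < inverse (real (Suc n))" using mb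
        by (simp add: divide_simps mult.commute)
      moreover have "s n = (b - w n)/(b-m)" unfolding s_def
        using minus_divide_divide[of "b - w n" "b - m"] by simp
      ultimately show ?thesis using w[of n] mb by simp
    qed
    have s01: "\<forall>n. 0 < s n \<and> s n \<le> 1"
    proof
      fix n have "inverse (real (Suc n)) \<le> 1" using le_imp_inverse_le[of 1 "real (Suc n)"] by simp
      then show "0 < s n \<and> s n \<le> 1" using sb[of n] by linarith
    qed
    have s0: "s \<longlonglongrightarrow> 0"
    proof (rule tendsto_sandwich[of "\<lambda>n. 0" s sequentially "\<lambda>n. inverse (real (Suc n))"])
      show "\<forall>\<^sub>F n in sequentially. 0 \<le> s n" using sb by (simp add: less_imp_le)
      show "\<forall>\<^sub>F n in sequentially. s n \<le> inverse (real (Suc n))" using sb by simp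
    qed (rule tendsto_const LIMSEQ_inverse_real_of_nat)+
    have ws: "b + (m-b) * s n = w n" for n using mb by (simp add: s_def)
    have pt: "b + (m-b) * x \<in> A \<inter> {m..<b}" if x: "x \<in> insert 1 (range s)" for x
    proof -
      consider "x = 1" | n where "x = s n" using x by blast
      then show ?thesis
      proof cases
        case 1 then show ?thesis using mA mb by simp
      next
        case 2
        have "(b-m)/real (Suc n) \<le> b - m" using mb by (simp add: divide_simps)
        then show ?thesis using 2 ws[of n] w[of n] by simp
      qed
    qed
    have Q: "\<forall>x\<in>insert 1 (range s). \<forall>y\<in>insert 1 (range s). x < y \<longrightarrow> Pp \<alpha> \<beta> (b+(m-b)*x) (b+(m-b)*y)"
      using pt H1 by blast
    have es: "\<forall>n. \<alpha> (b + (m-b) * s n) = \<beta> (b + (m-b) * s n)" using ws w eqA by simp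
    have "Pp \<alpha> \<beta> b m"
      using L[OF wd pa pb _ _ _ _ s0 s01 es Q] bA mA A01 eqA by blast
    then show ?thesis using Psym by blast
  qed
qed




lemma pi_restr: "path_image (restr_path u v g) = g ` closed_segment u v"
  unfolding restr_comp path_image_compose path_image_subpath_gen by simp

lemma aw_lemma:
  fixes \<alpha> \<beta> :: "real \<Rightarrow> 'a::topological_space"
  assumes pa: "path \<alpha>" and pb: "path \<beta>" and A01: "A \<subseteq> {0..1}" and eqA: "\<forall>x\<in>A. \<alpha> x = \<beta> x"
    and xA: "x \<in> A" and bad: "\<not> good \<alpha> \<beta> A x"
  shows "\<alpha> x \<in> aw"
proof -
  have x01: "x \<in> {0..1}" using xA A01 by blast
  have "\<forall>n. \<exists>c. c \<in> A \<and> dist c x < inverse (real (Suc n)) \<and> \<not> Pp \<alpha> \<beta> x c"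
  proof
    fix n
    have "inverse (real (Suc n)) > 0" by simp
    then show "\<exists>c. c \<in> A \<and> dist c x < inverse (real (Suc n)) \<and> \<not> Pp \<alpha> \<beta> x c"
      using bad unfolding good_def by blast
  qed
  from choice[OF this] obtain c where c: "\<forall>n. c n \<in> A \<and> dist (c n) x < inverse (real (Suc n)) \<and> \<not> Pp \<alpha> \<beta> x (c n)"
    by blast
  define gs where "gs n = restr_path x (c n) \<alpha> +++ restr_path (c n) x \<beta>" for n
  have c01: "c n \<in> {0..1}" for n using c A01 by blast
  have ec: "\<alpha> (c n) = \<beta> (c n)" for n using c eqA by blast
  have ex: "\<alpha> x = \<beta> x" using xA eqA by blast
  have loop: "is_loop_at (gs n) (\<alpha> x)" for n
  proof -
    have "path (restr_path x (c n) \<alpha>)" "path (restr_path (c n) x \<beta>)"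
      using path_restr pa pb x01 c01 by blast+
    then have "path (gs n)" unfolding gs_def using ec by (intro path_join_imp) simp_all
    then show ?thesis unfolding is_loop_at_def gs_def using ex by simp
  qed
  have nontriv: "\<not> trivial_loop (gs n)" for n
  proof
    assume "trivial_loop (gs n)"
    then obtain k where H: "homotopic_paths UNIV (gs n) (\<lambda>t. k)" unfolding trivial_loop_def by blast
    have "pathstart (gs n) = pathstart (\<lambda>t::real. k)" using homotopic_paths_imp_pathstart[OF H] .
    moreover have "pathstart (gs n) = \<alpha> x" unfolding gs_def by simp
    moreover have "pathstart (\<lambda>t::real. k) = k" by (simp add: pathstart_def)
    ultimately have k: "k = \<alpha> x" by simp
    let ?A1 = "restr_path x (c n) \<alpha>" and ?B1 = "restr_path (c n) x \<beta>" and ?B2 = "restr_path x (c n) \<beta>"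
    have pA1: "path ?A1" and pB1: "path ?B1" and pB2: "path ?B2"
      using path_restr pa pb x01 c01 by blast+
    have kk: "restr_path x x \<beta> = (\<lambda>t. k)" using k ex by (simp add: restr_path_def)
    have cc: "restr_path (c n) (c n) \<beta> = restr_path (c n) (c n) \<alpha>" using ec by (simp add: restr_path_def)
    have s1: "homotopic_paths UNIV ?B2 ((\<lambda>t. k) +++ ?B2)"
      using homotopic_paths_sym[OF join_restr[OF pb x01 x01 c01[of n]]] kk by simp
    have s2: "homotopic_paths UNIV ((\<lambda>t. k) +++ ?B2) ((?A1 +++ ?B1) +++ ?B2)"
      using homotopic_paths_join[OF homotopic_paths_sym[OF H], of ?B2 ?B2] pB2 k ex
      by (simp add: gs_def pathfinish_def)
    have s3: "homotopic_paths UNIV ((?A1 +++ ?B1) +++ ?B2) (?A1 +++ (?B1 +++ ?B2))"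
      using homotopic_paths_sym[OF homotopic_paths_assoc[of ?A1 UNIV ?B1 ?B2]] pA1 pB1 pB2 ec by simp
    have s4: "homotopic_paths UNIV (?B1 +++ ?B2) (restr_path (c n) (c n) \<alpha>)"
      using join_restr[OF pb c01[of n] x01 c01[of n]] cc by simp
    have s5: "homotopic_paths UNIV (?A1 +++ (?B1 +++ ?B2)) (?A1 +++ restr_path (c n) (c n) \<alpha>)"
      using homotopic_paths_join[OF _ s4, of ?A1 ?A1] pA1 ec by simp
    have s6: "homotopic_paths UNIV (?A1 +++ restr_path (c n) (c n) \<alpha>) ?A1"
      using join_restr[OF pa x01 c01[of n] c01[of n]] .
    have "homotopic_paths UNIV ?B2 ?A1"
      using homotopic_paths_trans[OF s1 homotopic_paths_trans[OF s2 homotopic_paths_trans[OF s3 homotopic_paths_trans[OF s5 s6]]]] .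
    then have "Pp \<alpha> \<beta> x (c n)" unfolding Pp_def by (rule homotopic_paths_sym)
    then show False using c by blast
  qed
  have null: "\<forall>\<^sub>F n in sequentially. path_image (gs n) \<subseteq> U" if U: "open U" "\<alpha> x \<in> U" for U
  proof -
    have ca: "continuous_on {0..1} \<alpha>" and cb: "continuous_on {0..1} \<beta>" using pa pb by (auto simp: path_def)
    obtain O1 where O1: "open O1" "x \<in> O1" "\<forall>y\<in>{0..1}. y \<in> O1 \<longrightarrow> \<alpha> y \<in> U"
      using ca[unfolded continuous_on_topological, rule_format, OF x01 U(1) U(2)] by blast
    obtain O2 where O2: "open O2" "x \<in> O2" "\<forall>y\<in>{0..1}. y \<in> O2 \<longrightarrow> \<beta> y \<in> U"
      using cb[unfolded continuous_on_topological, rule_format, OF x01 U(1)] U(2) ex by auto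
    have "open (O1 \<inter> O2)" "x \<in> O1 \<inter> O2" using O1 O2 by auto
    then obtain r where r: "r > 0" "ball x r \<subseteq> O1 \<inter> O2" using open_contains_ball by blast
    obtain N where N: "inverse (real (Suc N)) < r" using reals_Archimedean[OF r(1)] by blast
    have "path_image (gs n) \<subseteq> U" if n: "n \<ge> N" for n
    proof -
      have i1: "inverse (real (Suc n)) \<le> inverse (real (Suc N))" using n by (simp add: le_imp_inverse_le)
      have d: "dist x (c n) < inverse (real (Suc n))" using c by (simp add: dist_commute)
      have "dist x (c n) < r" using i1 d N by linarith
      then have "c n \<in> ball x r \<inter> {0..1}" "x \<in> ball x r \<inter> {0..1}" using c01 x01 r by auto
      moreover have "convex (ball x r \<inter> {0..1})" by (simp add: convex_Int)
      ultimately have seg: "closed_segment x (c n) \<subseteq> ball x r \<inter> {0..1}"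
        using closed_segment_subset by blast
      then have "closed_segment (c n) x \<subseteq> ball x r \<inter> {0..1}" by (simp add: closed_segment_commute)
      have "\<alpha> ` closed_segment x (c n) \<subseteq> U" using seg r O1 by blast
      moreover have "\<beta> ` closed_segment x (c n) \<subseteq> U" using seg r O2 by blast
      then have "\<beta> ` closed_segment (c n) x \<subseteq> U" by (simp add: closed_segment_commute)
      ultimately show ?thesis unfolding gs_def
        using ec by (subst path_image_join) (simp_all add: pi_restr)
    qed
    then show ?thesis unfolding eventually_sequentially by blast
  qed
  have "null_sequence gs (\<alpha> x)" unfolding null_sequence_def using loop null by blast
  then show ?thesis unfolding aw_def using nontriv by blast
qed




theorem mainTheorem14:
  fixes \<alpha> \<beta> :: "real \<Rightarrow> 'a::topological_space" and A :: "real set"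
  assumes "well_defined_scattered_products TYPE('a)"
    and "path \<alpha>" and "path \<beta>"
    and "homotopy_cut_set 0 1 \<alpha> \<beta> A"
  shows "\<exists>B\<subseteq>A. homotopy_cut_set 0 1 \<alpha> \<beta> B \<and>
           \<alpha> ` (B \<inter> {0<..<1}) = \<beta> ` (B \<inter> {0<..<1}) \<and>
           \<alpha> ` (B \<inter> {0<..<1}) \<subseteq> aw"
proof -
  note wd = assms(1) and pa = assms(2) and pb = assms(3) and cut = assms(4)
  have A01: "A \<subseteq> {0..1}" and cA: "closed A" and intA: "interior (closure A) = {}"
    and A0: "0 \<in> A" and A1: "1 \<in> A" and eqA: "\<forall>x\<in>A. \<alpha> x = \<beta> x"
    using cut_facts[OF cut] by auto
  define D where "D = {x\<in>A. \<not> good \<alpha> \<beta> A x}"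
  define B where "B = insert 0 (insert 1 D)"
  have BA: "B \<subseteq> A" using A0 A1 by (auto simp: D_def B_def)
  have cD: "closed D" unfolding D_def using D_closed[OF cA A01 pa pb] .
  have cB: "closed B" unfolding B_def using cD by simp
  have "interior (closure B) \<subseteq> interior (closure A)"
    using BA by (intro interior_mono closure_mono)
  then have intB: "interior (closure B) = {}" using intA by simp
  have eqB: "\<forall>x\<in>B. \<alpha> x = \<beta> x" using BA eqA by blast
  have B01: "B \<subseteq> {0..1}" using BA A01 by blast
  have compB: "homotopic_paths UNIV (restr_path a b \<alpha>) (restr_path a b \<beta>)"
    if ab: "a < b" and C: "{a<..<b} \<in> components ({0..1} - B)" for a b
  proof -
    have ce: "a \<in> B \<and> b \<in> B \<and> 0 \<le> a \<and> b \<le> 1 \<and> {a<..<b} \<inter> B = {}"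
      using comp_end[OF C ab] .
    have aA: "a \<in> A" and bA: "b \<in> A" using ce BA by auto
    have allgood: "good \<alpha> \<beta> A z" if z: "z \<in> A" "a < z" "z < b" for z
    proof -
      have "z \<in> {a<..<b}" using z by simp
      then have "z \<notin> B" using ce by blast
      then show ?thesis using z by (simp add: B_def D_def)
    qed
    have H: "Pp \<alpha> \<beta> x y" if x: "x \<in> A" "a < x" "x < b" and y: "y \<in> A" "a < y" "y < b" for x y
    proof (cases "x \<le> y")
      case True
      have "\<forall>z\<in>A \<inter> {x..y}. good \<alpha> \<beta> A z"
      proof
        fix z assume "z \<in> A \<inter> {x..y}"
        then show "good \<alpha> \<beta> A z" by (intro allgood) (use x y in auto)
      qed
      then show ?thesis using chain[OF cut pa pb True x(1) y(1)] by blast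
    next
      case False
      then have "y \<le> x" by simp
      moreover have "\<forall>z\<in>A \<inter> {y..x}. good \<alpha> \<beta> A z"
      proof
        fix z assume "z \<in> A \<inter> {y..x}"
        then show "good \<alpha> \<beta> A z" by (intro allgood) (use x y in auto)
      qed
      ultimately have "Pp \<alpha> \<beta> y x" using chain[OF cut pa pb _ y(1) x(1)] by blast
      then show ?thesis using Psym by blast
    qed
    have "Pp \<alpha> \<beta> a b"
    proof (cases "{a<..<b} \<inter> A = {}")
      case True
      then show ?thesis using gap_P[OF cut ab aA bA] by blast
    next
      case False
      then obtain m where m: "m \<in> A" "a < m" "m < b" by auto
      have Hl: "\<forall>x\<in>A \<inter> {a<..m}. \<forall>y\<in>A \<inter> {a<..m}. Pp \<alpha> \<beta> x y"
      proof (intro ballI)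
        fix x y assume "x \<in> A \<inter> {a<..m}" "y \<in> A \<inter> {a<..m}"
        then show "Pp \<alpha> \<beta> x y" by (intro H) (use m in auto)
      qed
      have Hr: "\<forall>x\<in>A \<inter> {m..<b}. \<forall>y\<in>A \<inter> {m..<b}. Pp \<alpha> \<beta> x y"
      proof (intro ballI)
        fix x y assume "x \<in> A \<inter> {m..<b}" "y \<in> A \<inter> {m..<b}"
        then show "Pp \<alpha> \<beta> x y" by (intro H) (use m in auto)
      qed
      have Pam: "Pp \<alpha> \<beta> a m" using M_left[OF wd cut pa pb m(2) aA m(1) Hl] .
      have Pmb: "Pp \<alpha> \<beta> m b" using M_right[OF wd cut pa pb m(3) bA m(1) Hr] .
      have i: "a \<in> {0..1}" "m \<in> {0..1}" "b \<in> {0..1}" using aA m bA A01 by auto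
      show ?thesis using Ptrans[OF pa pb i Pam Pmb] .
    qed
    then show ?thesis unfolding Pp_def .
  qed
  have cutB: "homotopy_cut_set 0 1 \<alpha> \<beta> B"
    unfolding homotopy_cut_set_def
  proof (intro conjI allI impI B01 cB intB eqB)
    fix a b assume "a < b \<and> {a<..<b} \<in> components ({0..1} - B)"
    then show "homotopic_paths UNIV (restr_path a b \<alpha>) (restr_path a b \<beta>)" using compB by blast
  qed (auto simp: B_def)
  have img: "\<alpha> ` (B \<inter> {0<..<1}) = \<beta> ` (B \<inter> {0<..<1})"
    using eqB by (intro image_cong) auto
  have awB: "\<alpha> ` (B \<inter> {0<..<1}) \<subseteq> aw"
  proof
    fix y assume "y \<in> \<alpha> ` (B \<inter> {0<..<1})"
    then obtain x where x: "x \<in> B" "0 < x" "x < 1" "y = \<alpha> x" by auto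
    then have "x \<in> D" by (auto simp: B_def)
    then have "x \<in> A" "\<not> good \<alpha> \<beta> A x" by (auto simp: D_def)
    then show "y \<in> aw" using aw_lemma[OF pa pb A01 eqA] x by blast
  qed
  show ?thesis by (intro exI[of _ B] conjI BA cutB img awB)
qed


end
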